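(* For every $n\equiv 3 \pmod{16}$ with $n\geq 19$, there exists an almost 2-perfect maximum 8-cycle packing of $K_n$.
   Context: An 8-cycle packing of $K_n$ on vertex set $\mathcal{X}$ is a triple $(\mathcal{X},\mathcal{C},\mathcal{L})$ with $\mathcal{C}$ a collection of pairwise edge-disjoint 8-cycles of $K_n$ and leave $\mathcal{L}$ the set of edges in no cycle of $\mathcal{C}$; it is maximum if $|\mathcal{L}|$ is minimum among all 8-cycle packings of $K_n$. For an 8-cycle $C$, an inside 8-cycle of $C$ is an 8-cycle on the same vertex set sharing no edge with $C$. The packing is almost 2-perfect if one can choose for each $C\in\mathcal{C}$ an inside 8-cycle $C'$ such that $(\mathcal{X},\{C'\},\mathcal{L})$ is again an 8-cycle packing with the same leave. *)

theory Defs
  imports Main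
begin

definition complete_edges :: "'a set \<Rightarrow> 'a set set" where
  "complete_edges X = {e. e \<subseteq> X \<and> card e = 2}"

definition cycle_edges :: "'a list \<Rightarrow> 'a set set" where
  "cycle_edges vs = {{vs ! i, vs ! ((i + 1) mod length vs)} | i. i < length vs}"

definition is_8cycle :: "'a set \<Rightarrow> 'a set set \<Rightarrow> bool" where
  "is_8cycle X C \<longleftrightarrow> (\<exists>vs. length vs = 8 \<and> distinct vs \<and> set vs \<subseteq> X \<and> C = cycle_edges vs)"

definition cyc_vertices :: "'a set set \<Rightarrow> 'a set" where
  "cyc_vertices C = \<Union>C"

definition is_8cycle_packing :: "'a set \<Rightarrow> 'a set set set \<Rightarrow> 'a set set \<Rightarrow> bool" where
  "is_8cycle_packing X Cs L \<longleftrightarrow>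
     (\<forall>C\<in>Cs. is_8cycle X C) \<and>
     (\<forall>C1\<in>Cs. \<forall>C2\<in>Cs. C1 \<noteq> C2 \<longrightarrow> C1 \<inter> C2 = {}) \<and>
     L = complete_edges X - \<Union>Cs"

definition is_maximum_8cycle_packing :: "'a set \<Rightarrow> 'a set set set \<Rightarrow> 'a set set \<Rightarrow> bool" where
  "is_maximum_8cycle_packing X Cs L \<longleftrightarrow>
     is_8cycle_packing X Cs L \<and>
     (\<forall>Cs' L'. is_8cycle_packing X Cs' L' \<longrightarrow> card L \<le> card L')"

definition is_inside_8cycle :: "'a set \<Rightarrow> 'a set set \<Rightarrow> 'a set set \<Rightarrow> bool" where
  "is_inside_8cycle X C C' \<longleftrightarrow>
     is_8cycle X C' \<and> cyc_vertices C' = cyc_vertices C \<and> C \<inter> C' = {}"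

definition almost_2_perfect :: "'a set \<Rightarrow> 'a set set set \<Rightarrow> 'a set set \<Rightarrow> bool" where
  "almost_2_perfect X Cs L \<longleftrightarrow>
     (\<exists>f. (\<forall>C\<in>Cs. is_inside_8cycle X C (f C)) \<and> inj_on f Cs \<and>
          is_8cycle_packing X (f ` Cs) L)"

end

theory Submission
  imports Defs
begin


definition cel :: "'a list \<Rightarrow> 'a set set" where
  "cel vs = set (map (\<lambda>i. {vs!i, vs!((i+1) mod length vs)}) [0..<length vs])"

lemma cycle_edges_cel: "cycle_edges vs = cel vs"
  by (auto simp: cycle_edges_def cel_def)

lemma cycle_edges_img: "cycle_edges vs = (\<lambda>i. {vs!i, vs!((i+1) mod length vs)}) ` {..<length vs}"
  by (auto simp: cycle_edges_def)

lemma cycle_edges_map: "cycle_edges (map g vs) = (image g) ` cycle_edges vs"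
proof -
  have "cycle_edges (map g vs) = (\<lambda>i. image g {vs!i, vs!((i+1) mod length vs)}) ` {..<length vs}"
    unfolding cycle_edges_img
  proof (rule image_cong)
    show "{..<length (map g vs)} = {..<length vs}" by simp
    fix x assume "x \<in> {..<length vs}"
    then have x: "x < length vs" by simp
    then have m: "(x+1) mod length vs < length vs" by (intro mod_less_divisor) (cases vs, auto)
    show "{map g vs ! x, map g vs ! ((x + 1) mod length (map g vs))} = g ` {vs ! x, vs ! ((x + 1) mod length vs)}"
      using x m by simp
  qed
  thus ?thesis unfolding cycle_edges_img[of vs] image_image by simp
qed

lemma len8: "length vs = 8 \<Longrightarrow> \<exists>a0 a1 a2 a3 a4 a5 a6 a7. vs = [a0,a1,a2,a3,a4,a5,a6,a7]"
  by (cases vs rule: list.exhaust; simp; rename_tac l; case_tac l; simp; rename_tac l; case_tac l; simp;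
      rename_tac l; case_tac l; simp; rename_tac l; case_tac l; simp; rename_tac l; case_tac l; simp;
      rename_tac l; case_tac l; simp; rename_tac l; case_tac l; simp; rename_tac l; case_tac l; simp)

lemma cel8: "cel [a0,a1,a2,a3,a4,a5,a6,a7] = {{a0,a1},{a1,a2},{a2,a3},{a3,a4},{a4,a5},{a5,a6},{a6,a7},{a7,a0}}"
  by (simp add: cel_def upt_rec insert_commute)

lemma card_cycle8: assumes "length vs = 8" "distinct vs" shows "card (cycle_edges vs) = 8"
proof -
  obtain a0 a1 a2 a3 a4 a5 a6 a7 where v: "vs = [a0,a1,a2,a3,a4,a5,a6,a7]" using len8[OF assms(1)] by blast
  show ?thesis using assms(2) unfolding cycle_edges_cel v cel8 by (auto simp: doubleton_eq_iff card_insert_if)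
qed

lemma cyc_vert: assumes "vs \<noteq> []" shows "\<Union>(cycle_edges vs) = set vs"
proof
  show "\<Union>(cycle_edges vs) \<subseteq> set vs" using assms by (auto simp: cycle_edges_def)
  show "set vs \<subseteq> \<Union>(cycle_edges vs)"
  proof
    fix x assume "x \<in> set vs"
    then obtain i where "i < length vs" "x = vs!i" by (auto simp: in_set_conv_nth)
    thus "x \<in> \<Union>(cycle_edges vs)" unfolding cycle_edges_def by blast
  qed
qed
lemma count_disj:
  assumes fin: "finite I" and fc: "\<And>i. i\<in>I \<Longrightarrow> finite (c i) \<and> card (c i) = m"
    and sub: "\<And>i. i\<in>I \<Longrightarrow> c i \<subseteq> E" and cov: "E \<subseteq> (\<Union>i\<in>I. c i)"
    and cE: "card E = m * card I"
  shows "(\<Union>i\<in>I. c i) = E" "\<And>i j. i\<in>I \<Longrightarrow> j\<in>I \<Longrightarrow> i\<noteq>j \<Longrightarrow> c i \<inter> c j = {}"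
proof -
  show eq: "(\<Union>i\<in>I. c i) = E" using sub cov by blast
  fix i j assume i: "i\<in>I" and j: "j\<in>I" and ij: "i\<noteq>j"
  show "c i \<inter> c j = {}"
  proof (rule ccontr)
    assume ne: "c i \<inter> c j \<noteq> {}"
    let ?R = "\<Union>k\<in>I-{i}. c k"
    have finR: "finite ?R" using fin fc by auto
    have U: "(\<Union>k\<in>I. c k) = c i \<union> ?R" using i by blast
    have "c i \<inter> ?R \<noteq> {}" using ne j ij by blast
    hence ci: "card (c i \<inter> ?R) \<ge> 1" using finR by (simp add: Suc_le_eq card_gt_0_iff)
    have "card ?R \<le> (\<Sum>k\<in>I-{i}. card (c k))" by (rule card_UN_le) (use fin in auto)
    also have "\<dots> = (\<Sum>k\<in>I-{i}. m)" using fc by (intro sum.cong) auto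
    also have "\<dots> = m * (card I - 1)" using fin i by simp
    finally have cR: "card ?R \<le> m * (card I - 1)" .
    have "card (c i \<union> ?R) + card (c i \<inter> ?R) = card (c i) + card ?R"
      using fc[OF i] finR by (intro card_Un_Int[symmetric]) auto
    hence "card E + 1 \<le> m + m * (card I - 1)" using U eq ci cR fc[OF i] by simp
    moreover have "card I \<ge> 1" using fin i by (simp add: Suc_le_eq card_gt_0_iff) blast
    ultimately show False using cE by (cases "card I") (auto simp: algebra_simps)
  qed
qed

definition DL :: "nat list list" where "DL = [[0, 3, 5, 8, 17, 1, 18, 7], [0, 10, 14, 18, 4, 2, 3, 17], [2, 11, 16, 4, 10, 8, 6, 13], [1, 7, 12, 6, 4, 14, 16, 13], [3, 7, 10, 16, 15, 5, 9, 14], [1, 6, 17, 2, 12, 3, 11, 9], [8, 9, 18, 17, 13, 14, 11, 15], [1, 4, 3, 6, 15, 2, 18, 8], [1, 11, 12, 18, 5, 0, 4, 15], [0, 9, 17, 5, 11, 6, 7, 14], [2, 8, 13, 7, 5, 12, 17, 14], [4, 8, 11, 17, 16, 3, 10, 12], [2, 7, 15, 0, 13, 4, 9, 10], [6, 10, 18, 15, 14, 12, 9, 16], [2, 5, 4, 7, 16, 0, 18, 6], [2, 9, 13, 18, 3, 1, 5, 16], [1, 10, 15, 3, 9, 7, 8, 12], [0, 6, 14, 8, 3, 13, 15, 12], [5, 6, 9, 15, 17, 4, 11, 13], [0, 8, 16, 1, 14, 5, 10, 11], [7, 11, 18, 16, 12, 13, 10, 17]]"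
definition DR :: "nat list list" where "DR = [[0, 8, 18, 5, 1, 3, 7, 17], [0, 3, 4, 14, 2, 10, 17, 18], [2, 6, 10, 11, 4, 13, 16, 8], [1, 14, 6, 7, 13, 12, 4, 16], [3, 9, 15, 10, 5, 7, 14, 16], [1, 12, 9, 2, 11, 6, 3, 17], [8, 11, 18, 13, 9, 14, 15, 17], [1, 6, 18, 3, 2, 4, 8, 15], [1, 4, 5, 12, 0, 11, 15, 18], [0, 7, 11, 9, 5, 14, 17, 6], [2, 12, 7, 8, 14, 13, 5, 17], [4, 10, 16, 11, 3, 8, 12, 17], [2, 13, 10, 0, 9, 7, 4, 15], [6, 9, 18, 14, 10, 12, 16, 15], [2, 7, 18, 4, 0, 5, 6, 16], [2, 5, 3, 13, 1, 9, 16, 18], [1, 8, 9, 10, 3, 12, 15, 7], [0, 13, 8, 6, 12, 14, 3, 15], [5, 11, 17, 9, 4, 6, 13, 15], [0, 14, 11, 1, 10, 8, 5, 16], [7, 10, 18, 12, 11, 13, 17, 16]]"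
definition DX :: "bool \<Rightarrow> nat list list" where "DX s = (if s then DR else DL)"
definition PP :: "nat \<Rightarrow> nat list" where
  "PP t = (if t = 0 then [0,4,1,5,2,6,3,7] else [0,5,3,4,2,7,1,6])"

lemma DL_ok: "\<forall>d<21. length (DL!d) = 8 \<and> distinct (DL!d) \<and> (\<forall>x\<in>set (DL!d). x < 19) \<and> (\<forall>e\<in>cel (DL!d). \<exists>x\<in>e. 3 \<le> x)"
  by code_simp
lemma DR_ok: "\<forall>d<21. length (DR!d) = 8 \<and> distinct (DR!d) \<and> (\<forall>x\<in>set (DR!d). x < 19) \<and> (\<forall>e\<in>cel (DR!d). \<exists>x\<in>e. 3 \<le> x)"
  by code_simp
lemma DLR_ok: "\<forall>d<21. set (DR!d) = set (DL!d) \<and> cel (DL!d) \<inter> cel (DR!d) = {}"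
  by code_simp
definition pedges :: "'a list \<Rightarrow> ('a \<times> 'a) list" where
  "pedges vs = map (\<lambda>i. (vs!i, vs!((i+1) mod length vs))) [0..<length vs]"
lemma pe1: "(u,v) \<in> set (pedges vs) \<Longrightarrow> {u,v} \<in> cycle_edges vs"
  by (auto simp: pedges_def cycle_edges_def)
lemma pe2: "(v,u) \<in> set (pedges vs) \<Longrightarrow> {u,v} \<in> cycle_edges vs"
  by (auto simp: pedges_def cycle_edges_def insert_commute)



definition WL :: "(nat \<times> nat \<times> nat) list" where "WL = [(0,3,0), (0,4,8), (0,5,8), (0,6,17), (0,7,0), (0,8,19), (0,9,9), (0,10,1), (0,11,19), (0,12,17), (0,13,12), (0,14,9), (0,15,12), (0,16,14), (0,17,1), (0,18,14), (1,3,15), (1,4,7), (1,5,15), (1,6,5), (1,7,3), (1,8,7), (1,9,5), (1,10,16), (1,11,8), (1,12,16), (1,13,3), (1,14,19), (1,15,8), (1,16,19), (1,17,0), (1,18,0), (2,3,1), (2,4,1), (2,5,14), (2,6,14), (2,7,12), (2,8,10), (2,9,15), (2,10,12), (2,11,2), (2,12,5), (2,13,2), (2,14,10), (2,15,7), (2,16,15), (2,17,5), (2,18,7), (3,4,7), (3,5,0), (3,6,7), (3,7,4), (3,8,17), (3,9,16), (3,10,11), (3,11,5), (3,12,5), (3,13,17), (3,14,4), (3,15,16), (3,16,11), (3,17,1), (3,18,15), (4,5,14), (4,6,3), (4,7,14), (4,8,11), (4,9,12), (4,10,2), (4,11,18), (4,12,11), (4,13,12), (4,14,3), (4,15,8),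 (4,16,2), (4,17,18), (4,18,1), (5,6,18), (5,7,10), (5,8,0), (5,9,4), (5,10,19), (5,11,9), (5,12,10), (5,13,18), (5,14,19), (5,15,4), (5,16,15), (5,17,9), (5,18,8), (6,7,9), (6,8,2), (6,9,18), (6,10,13), (6,11,9), (6,12,3), (6,13,2), (6,14,17), (6,15,7), (6,16,13), (6,17,5), (6,18,14), (7,8,16), (7,9,16), (7,10,4), (7,11,20), (7,12,3), (7,13,10), (7,14,9), (7,15,12), (7,16,14), (7,17,20), (7,18,0), (8,9,6), (8,10,2), (8,11,11), (8,12,16), (8,13,10), (8,14,17), (8,15,6), (8,16,19), (8,17,0), (8,18,7), (9,10,12), (9,11,5), (9,12,13), (9,13,15), (9,14,4), (9,15,18), (9,16,13), (9,17,9), (9,18,6), (10,11,19), (10,12,11), (10,13,20), (10,14,1), (10,15,16), (10,16,4), (10,17,20), (10,18,13), (11,12,8), (11,13,18), (11,14,6), (11,15,6), (11,16,2), (11,17,11), (11,18,20), (12,13,20), (12,14,13), (12,15,17), (12,16,20), (12,17,10), (12,18,8), (13,14,6), (13,15,17), (13,16,3), (13,17,6), (13,18,15), (14,15,13), (14,16,3), (14,17,10), (14,18,1), (15,16,4), (15,17,18), (15,18,13), (16,17,11), (16,18,20), (17,18,6)]"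
definition WR :: "(nat \<times> nat \<times> nat) list" where "WR = [(0,3,1), (0,4,14), (0,5,14), (0,6,9), (0,7,9), (0,8,0), (0,9,12), (0,10,12), (0,11,8), (0,12,8), (0,13,17), (0,14,19), (0,15,17), (0,16,19), (0,17,0), (0,18,1), (1,3,0), (1,4,8), (1,5,0), (1,6,7), (1,7,16), (1,8,16), (1,9,15), (1,10,19), (1,11,19), (1,12,5), (1,13,15), (1,14,3), (1,15,7), (1,16,3), (1,17,5), (1,18,8), (2,3,7), (2,4,7), (2,5,15), (2,6,2), (2,7,14), (2,8,2), (2,9,5), (2,10,1), (2,11,5), (2,12,10), (2,13,12), (2,14,1), (2,15,12), (2,16,14), (2,17,10), (2,18,15), (3,4,1), (3,5,15), (3,6,5), (3,7,0), (3,8,11), (3,9,4), (3,10,16), (3,11,11), (3,12,16), (3,13,15), (3,14,17), (3,15,17), (3,16,4), (3,17,5), (3,18,7), (4,5,8), (4,6,18), (4,7,12), (4,8,7), (4,9,18), (4,10,11), (4,11,2), (4,12,3), (4,13,2), (4,14,1), (4,15,12), (4,16,3), (4,17,11), (4,18,14), (5,6,14), (5,7,4), (5,8,19), (5,9,9), (5,10,4), (5,11,18), (5,12,8), (5,13,10), (5,14,9), (5,15,18), (5,16,19), (5,17,10), (5,18,0), (6,7,3), (6,8,17), (6,9,13), (6,10,2), (6,11,5), (6,12,17), (6,13,18), (6,14,3), (6,15,13), (6,16,14), (6,17,9), (6,18,7), (7,8,10), (7,9,12), (7,10,20), (7,11,9), (7,12,10), (7,13,3), (7,14,4), (7,15,16),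 (7,16,20), (7,17,0), (7,18,14), (8,9,16), (8,10,19), (8,11,6), (8,12,11), (8,13,17), (8,14,10), (8,15,7), (8,16,2), (8,17,6), (8,18,0), (9,10,16), (9,11,9), (9,12,5), (9,13,6), (9,14,6), (9,15,4), (9,16,15), (9,17,18), (9,18,13), (10,11,2), (10,12,13), (10,13,12), (10,14,13), (10,15,4), (10,16,11), (10,17,1), (10,18,20), (11,12,20), (11,13,20), (11,14,19), (11,15,8), (11,16,11), (11,17,18), (11,18,6), (12,13,3), (12,14,17), (12,15,16), (12,16,13), (12,17,11), (12,18,20), (13,14,10), (13,15,18), (13,16,2), (13,17,20), (13,18,6), (14,15,6), (14,16,4), (14,17,9), (14,18,13), (15,16,13), (15,17,6), (15,18,8), (16,17,20), (16,18,15), (17,18,1)]"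
definition allp :: "(nat \<times> nat) list" where "allp = [(u,v). u \<leftarrow> [0..<19], v \<leftarrow> [Suc u..<19], 3 \<le> v]"
definition wchk :: "nat list list \<Rightarrow> (nat \<times> nat \<times> nat) list \<Rightarrow> bool" where
  "wchk D W = (map (\<lambda>(u,v,d). (u,v)) W = allp \<and> list_all (\<lambda>(u,v,d). d < 21 \<and> ((u,v) \<in> set (pedges (D!d)) \<or> (v,u) \<in> set (pedges (D!d)))) W)"
lemma WL_ok: "wchk DL WL" by code_simp
lemma WR_ok: "wchk DR WR" by code_simp

lemma PP0_ok: "length (PP 0) = 8 \<and> distinct (PP 0) \<and> (\<forall>x\<in>set (PP 0). x < 8)"
  by code_simp
lemma PP1_ok: "length (PP 1) = 8 \<and> distinct (PP 1) \<and> (\<forall>x\<in>set (PP 1). x < 8)"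
  by code_simp
lemma PP_ok2: "set (PP 1) = set (PP 0) \<and> cel (PP 0) \<inter> cel (PP 1) = {}"
  by code_simp
lemma PP_cov0: "list_all (\<lambda>x. list_all (\<lambda>y. (x, y+4) \<in> set (pedges (PP 0)) \<or> (y+4, x) \<in> set (pedges (PP 0)) \<or> (x, y+4) \<in> set (pedges (PP 1)) \<or> (y+4,x) \<in> set (pedges (PP 1))) [0..<4]) [0..<4]"
  by code_simp

lemma edge8: assumes "length vs = 8" "distinct vs" "e \<in> cycle_edges vs"
  shows "\<exists>a b. e = {a,b} \<and> a \<noteq> b \<and> a \<in> set vs \<and> b \<in> set vs"
proof -
  obtain a0 a1 a2 a3 a4 a5 a6 a7 where v: "vs = [a0,a1,a2,a3,a4,a5,a6,a7]" using len8[OF assms(1)] by blast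
  show ?thesis using assms(2,3) unfolding cycle_edges_cel v cel8 by auto
qed

lemma edges_in: assumes "length vs = 8" "distinct vs" "e \<in> cycle_edges vs"
  shows "e \<subseteq> set vs \<and> card e = 2"
  using edge8[OF assms] by auto

lemma cov_from_W:
  assumes "wchk D W" "u < v" "v < 19" "3 \<le> v"
  shows "\<exists>d<21. {u,v} \<in> cycle_edges (D!d)"
proof -
  have "(u,v) \<in> set allp" using assms(2-4) by (auto simp: allp_def)
  hence "(u,v) \<in> set (map (\<lambda>(u,v,d). (u,v)) W)" using assms(1) by (simp add: wchk_def)
  then obtain d where x: "(u,v,d) \<in> set W" by auto
  moreover have "\<forall>x\<in>set W. case x of (u,v,d) \<Rightarrow> d < 21 \<and> ((u,v) \<in> set (pedges (D!d)) \<or> (v,u) \<in> set (pedges (D!d)))"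
    using assms(1) by (simp add: wchk_def list_all_iff)
  ultimately have "d < 21 \<and> ((u,v) \<in> set (pedges (D!d)) \<or> (v,u) \<in> set (pedges (D!d)))" by fastforce
  moreover have "{u,v} \<in> cycle_edges (D!d)" if "(u,v) \<in> set (pedges (D!d))" using pe1 that by metis
  moreover have "{u,v} \<in> cycle_edges (D!d)" if "(v,u) \<in> set (pedges (D!d))" using pe2 that by metis
  ultimately show ?thesis by blast
qed

lemma DX_ok: "d < 21 \<Longrightarrow> length (DX s!d) = 8 \<and> distinct (DX s!d) \<and> (\<forall>x\<in>set (DX s!d). x < 19)
   \<and> (\<forall>e\<in>cycle_edges (DX s!d). \<exists>x\<in>e. 3 \<le> x)"
  using DL_ok DR_ok by (cases s) (auto simp: DX_def cycle_edges_cel)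

lemma DX_cov: "u < v \<Longrightarrow> v < 19 \<Longrightarrow> 3 \<le> v \<Longrightarrow> \<exists>d<21. {u,v} \<in> cycle_edges (DX s!d)"
  using cov_from_W[OF WL_ok] cov_from_W[OF WR_ok] by (cases s) (auto simp: DX_def)

lemma PP_props: "t < 2 \<Longrightarrow> length (PP t) = 8 \<and> distinct (PP t) \<and> (\<forall>x\<in>set (PP t). x < 8)"
proof -
  assume "t < 2" hence "t = 0 \<or> t = 1" by auto
  thus ?thesis using PP0_ok PP1_ok by auto
qed

lemma PP_cov: "x < 4 \<Longrightarrow> y < 4 \<Longrightarrow> \<exists>t<2. {x, y+4} \<in> cycle_edges (PP t)"
proof -
  assume "x < 4" "y < 4"
  hence "(x, y+4) \<in> set (pedges (PP 0)) \<or> (y+4, x) \<in> set (pedges (PP 0)) \<or> (x, y+4) \<in> set (pedges (PP 1)) \<or> (y+4,x) \<in> set (pedges (PP 1))"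
    using PP_cov0 by (simp add: list_all_iff)
  moreover have "{x, y+4} \<in> cycle_edges (PP t)" if "(x, y+4) \<in> set (pedges (PP t)) \<or> (y+4, x) \<in> set (pedges (PP t))" for t
    using pe1 pe2 that by metis
  moreover have "(0::nat) < 2" "(1::nat) < 2" by auto
  ultimately show ?thesis by blast
qed

definition phi :: "nat \<Rightarrow> nat \<Rightarrow> nat" where "phi i x = (if x < 3 then x else x + 16*i)"
definition emb :: "nat \<Rightarrow> nat \<Rightarrow> nat \<Rightarrow> nat \<Rightarrow> nat \<Rightarrow> nat" where
  "emb i j a b x = (if x < 4 then 3+16*i+4*a+x else 3+16*j+4*b+(x-4))"
definition Iset :: "nat \<Rightarrow> ((nat \<times> nat) + (nat \<times> nat \<times> nat \<times> nat \<times> nat)) set" where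
  "Iset k = ({..<k} \<times> {..<21}) <+> {(i,j,a,b,t). i<j \<and> j<k \<and> a<4 \<and> b<4 \<and> t<2}"
fun lst :: "bool \<Rightarrow> (nat \<times> nat) + (nat \<times> nat \<times> nat \<times> nat \<times> nat) \<Rightarrow> nat list" where
  "lst s (Inl (i,d)) = map (phi i) (DX s ! d)"
| "lst s (Inr (i,j,a,b,t)) = map (emb i j a b) (PP (if s then 1 - t else t))"
definition Tri :: "nat set set" where "Tri = {{0,1},{0,2},{1,2}}"
definition EE :: "nat \<Rightarrow> nat set set" where "EE k = complete_edges {..<16*k+3} - Tri"

lemma phi_inj: "inj (phi i)" unfolding inj_def phi_def by auto
lemma phi_ge: "x \<le> phi i x" unfolding phi_def by auto
lemma emb_inj: "i < j \<Longrightarrow> a < 4 \<Longrightarrow> inj_on (emb i j a b) {..<8}"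
  unfolding inj_on_def emb_def by auto
lemma emb_ge: "3 \<le> emb i j a b x" unfolding emb_def by auto

lemma Iset_cases:
  assumes "x \<in> Iset k"
  obtains (L) i d where "x = Inl (i,d)" "i < k" "d < 21"
  | (R) i j a b t where "x = Inr (i,j,a,b,t)" "i < j" "j < k" "a < 4" "b < 4" "t < 2"
  using assms unfolding Iset_def by (auto simp: Plus_def)


lemma lst_props:
  assumes "x \<in> Iset k"
  shows "length (lst s x) = 8 \<and> distinct (lst s x) \<and> set (lst s x) \<subseteq> {..<16*k+3}"
  using assms
proof (cases rule: Iset_cases)
  case (L i d)
  note h = DX_ok[OF L(3), of s]
  have "\<forall>y\<in>set (DX s!d). phi i y < 16*k+3" using h L(2) by (auto simp: phi_def)
  thus ?thesis using h L by (auto simp: distinct_map inj_on_subset[OF phi_inj])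
next
  case (R i j a b t)
  have t': "(if s then 1 - t else t) < 2" using R by auto
  note h = PP_props[OF t']
  have "emb i j a b y < 16*k+3" if "y < 8" for y using that R by (auto simp: emb_def)
  hence "\<forall>y\<in>set (PP (if s then 1 - t else t)). emb i j a b y < 16*k+3" using h by blast
  moreover have "set (PP (if s then 1 - t else t)) \<subseteq> {..<8}" using h by auto
  hence "inj_on (emb i j a b) (set (PP (if s then 1 - t else t)))"
    by (rule inj_on_subset[OF emb_inj[OF R(2) R(4)]])
  ultimately show ?thesis using h R by (auto simp: distinct_map)
qed

lemma lst_big:
  assumes "x \<in> Iset k" "e \<in> cycle_edges (lst s x)"
  shows "\<exists>y\<in>e. 3 \<le> y"
  using assms(1)
proof (cases rule: Iset_cases)
  case (L i d)
  then obtain e0 where e0: "e0 \<in> cycle_edges (DX s!d)" "e = phi i ` e0"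
    using assms(2) by (auto simp: cycle_edges_map)
  then obtain y where "y \<in> e0" "3 \<le> y" using DX_ok[OF L(3), of s] by blast
  thus ?thesis using e0 phi_ge[of y i] by force
next
  case (R i j a b t)
  obtain p q where "e = {p,q}" "p \<in> set (lst s x)"
    using edge8[OF _ _ assms(2)] lst_props[OF assms(1), of s] by blast
  thus ?thesis using R emb_ge by auto
qed

lemma lst_sub:
  assumes "x \<in> Iset k"
  shows "cycle_edges (lst s x) \<subseteq> EE k"
proof
  fix e assume e: "e \<in> cycle_edges (lst s x)"
  note lp = lst_props[OF assms, of s]
  have "e \<subseteq> set (lst s x) \<and> card e = 2" using edges_in[OF _ _ e] lp by blast
  hence "e \<in> complete_edges {..<16*k+3}" using lp by (auto simp: complete_edges_def)
  moreover have "e \<notin> Tri" using lst_big[OF assms e] by (auto simp: Tri_def)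
  ultimately show "e \<in> EE k" by (simp add: EE_def)
qed

lemma lst_inside:
  assumes "x \<in> Iset k"
  shows "set (lst True x) = set (lst False x) \<and> cycle_edges (lst False x) \<inter> cycle_edges (lst True x) = {}"
  using assms
proof (cases rule: Iset_cases)
  case (L i d)
  have inj: "inj (image (phi i))" using inj_on_image_Pow[of "phi i" UNIV] phi_inj by simp
  have "cycle_edges (DL!d) \<inter> cycle_edges (DR!d) = {}" "set (DR!d) = set (DL!d)"
    using DLR_ok L(3) by (auto simp: cycle_edges_cel)
  thus ?thesis using L by (simp add: DX_def cycle_edges_map image_Int[OF inj, symmetric])
next
  case (R i j a b t)
  have inj: "inj_on (image (emb i j a b)) (Pow {..<8})" using inj_on_image_Pow emb_inj[OF R(2) R(4)] by blast
  have sub: "cycle_edges (PP t') \<subseteq> Pow {..<8}" if "t' < 2" for t'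
    using edges_in[of "PP t'"] PP_props[OF that] by blast
  have dj: "cycle_edges (PP 0) \<inter> cycle_edges (PP 1) = {}" "set (PP 1) = set (PP 0)"
    using PP_ok2 by (auto simp: cycle_edges_cel)
  have "t = 0 \<or> t = 1" using R by auto
  thus ?thesis
  proof
    assume t: "t = 0"
    show ?thesis using dj sub[of 0] sub[of 1]
      by (simp add: t R(1) cycle_edges_map inj_on_image_Int[OF inj, symmetric])
  next
    assume t: "t = 1"
    show ?thesis using dj sub[of 0] sub[of 1]
      by (simp add: t R(1) cycle_edges_map inj_on_image_Int[OF inj, symmetric] Int_commute)
  qed
qed


lemma lst_cover:
  assumes "e \<in> EE k"
  shows "\<exists>x\<in>Iset k. e \<in> cycle_edges (lst s x)"
proof -
  have e: "e \<subseteq> {..<16*k+3}" "card e = 2" "e \<notin> Tri" using assms by (auto simp: EE_def complete_edges_def)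
  obtain u v where uv: "e = {u,v}" "u < v"
    using e(2) unfolding card_2_iff by (metis insert_commute linorder_neqE_nat)
  have vn: "v < 16*k+3" using e(1) uv by auto
  have v3: "3 \<le> v"
  proof (rule ccontr)
    assume "\<not> 3 \<le> v"
    hence "u = 0 \<and> v = 1 \<or> u = 0 \<and> v = 2 \<or> u = 1 \<and> v = 2" using uv(2) by auto
    thus False using e(3) uv(1) by (auto simp: Tri_def)
  qed
  define i where "i = (v - 3) div 16"
  have ik: "i < k" using vn v3 unfolding i_def by auto
  show ?thesis
  proof (cases "u < 3 \<or> (u - 3) div 16 = i")
    case True
    define u' where "u' = (if u < 3 then u else u - 16*i)"
    define v' where "v' = v - 16*i"
    have v': "3 \<le> v'" "v' < 19" "phi i v' = v" using v3 unfolding v'_def i_def phi_def by auto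
    have m1: "16 * ((u-3) div 16) \<le> u - 3" "16 * ((v-3) div 16) \<le> v - 3"
      by (rule times_div_less_eq_dividend)+
    have ui: "u \<ge> 3 \<Longrightarrow> 16 * i \<le> u - 3" using True m1(1) by auto
    have vi: "16 * i \<le> v - 3" using m1(2) unfolding i_def .
    have u': "u' < v'" "phi i u' = u" using uv(2) v3 ui vi unfolding u'_def v'_def phi_def by auto
    obtain d where d: "d < 21" "{u',v'} \<in> cycle_edges (DX s!d)" using DX_cov[OF u'(1) v'(2) v'(1)] by blast
    have "e = phi i ` {u',v'}" using uv u' v' by auto
    moreover have "phi i ` {u',v'} \<in> image (phi i) ` cycle_edges (DX s!d)" using d(2) by (rule imageI)
    ultimately have "e \<in> cycle_edges (lst s (Inl (i,d)))" by (simp only: lst.simps cycle_edges_map)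
    moreover have "Inl (i,d) \<in> Iset k" using ik d by (auto simp: Iset_def Plus_def)
    ultimately show ?thesis by blast
  next
    case False
    define i' where "i' = (u - 3) div 16"
    have u3: "3 \<le> u" using False by auto
    have "(u-3) div 16 \<le> (v-3) div 16" using uv(2) by (intro div_le_mono) simp
    hence ii: "i' < i" using False unfolding i'_def i_def by auto
    define a where "a = ((u - 3) mod 16) div 4"
    define b where "b = ((v - 3) mod 16) div 4"
    define x0 where "x0 = (u - 3) mod 4"
    define y0 where "y0 = (v - 3) mod 4"
    have ab: "a < 4" "b < 4" "x0 < 4" "y0 < 4" unfolding a_def b_def x0_def y0_def by auto
    have dec: "w = 3 + 16 * ((w - 3) div 16) + 4 * (((w - 3) mod 16) div 4) + (w - 3) mod 4" if "3 \<le> w" for w :: nat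
    proof -
      obtain Q P R M where d: "Q = (w-3) div 16" "P = (w-3) mod 16" "R = P div 4" "M = (w-3) mod 4" by blast
      have 1: "w - 3 = 16 * Q + P" unfolding d using mult_div_mod_eq[of 16 "w-3"] by simp
      have h2a: "P = 4 * R + P mod 4" unfolding d(3) using mult_div_mod_eq[of 4 P] by simp
      have h2b: "P mod 4 = M" unfolding d by (simp add: mod_mod_cancel)
      have 2: "P = 4 * R + M" using h2a h2b by simp
      have "w = 3 + 16 * Q + 4 * R + M" using 1 2 that by linarith
      thus ?thesis unfolding d .
    qed
    have hu: "emb i' i a b x0 = u" using dec[OF u3] ab(3) unfolding emb_def a_def x0_def i'_def by simp
    have hv: "emb i' i a b (y0 + 4) = v" using dec[OF v3] unfolding emb_def b_def y0_def i_def by simp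
    obtain t where t: "t < 2" "{x0, y0+4} \<in> cycle_edges (PP t)" using PP_cov[OF ab(3) ab(4)] by blast
    define t' where "t' = (if s then 1 - t else t)"
    have tt: "(if s then 1 - t' else t') = t" "t' < 2" using t(1) unfolding t'_def by auto
    have "e = emb i' i a b ` {x0, y0+4}" using uv hu hv by auto
    moreover have "emb i' i a b ` {x0, y0+4} \<in> image (emb i' i a b) ` cycle_edges (PP t)" using t(2) by (rule imageI)
    ultimately have "e \<in> cycle_edges (lst s (Inr (i',i,a,b,t')))" using tt by (simp only: lst.simps cycle_edges_map)
    moreover have "Inr (i',i,a,b,t') \<in> Iset k" using ik ii ab tt by (auto simp: Iset_def Plus_def)
    ultimately show ?thesis by blast
  qed
qed

lemma sum_tri: "2 * (\<Sum>i<k. (k::nat) - Suc i) = k * (k - 1)"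
proof -
  have "(\<Sum>i<k. k - Suc i) = (\<Sum>i<k. i)" by (rule sum.nat_diff_reindex)
  moreover have "2 * (\<Sum>i<k. i) = k * (k - 1)" for k :: nat
  proof (induction k)
    case 0 show ?case by simp
  next
    case (Suc k)
    have "2 * (\<Sum>i<Suc k. i) = 2*(\<Sum>i<k. i) + 2*k" by simp
    also have "\<dots> = k*(k-1) + 2*k" using Suc by simp
    also have "\<dots> = Suc k * (Suc k - 1)" by (cases k) (auto simp: algebra_simps)
    finally show ?case .
  qed
  ultimately show ?thesis by simp
qed

lemma card_Iset: "card (Iset k) = 16*k*k + 5*k"
proof -
  let ?B = "{(i,j,a,b,t). i<j \<and> j<k \<and> a<(4::nat) \<and> b<(4::nat) \<and> t<(2::nat)}"
  have B: "?B = (SIGMA i:{..<k}. {i<..<k} \<times> ({..<4} \<times> ({..<4} \<times> {..<2})))" by auto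
  have "card ?B = (\<Sum>i<k. (k - Suc i) * 32)" unfolding B by (simp add: card_cartesian_product)
  also have "\<dots> = 32 * (\<Sum>i<k. k - Suc i)" by (simp add: sum_distrib_left mult.commute)
  also have "\<dots> = 16 * (k * (k - 1))" using sum_tri[of k] by simp
  finally have cB: "card ?B = 16 * (k * (k - 1))" .
  have fB: "finite ?B" unfolding B by auto
  have "card (Iset k) = 21 * k + 16 * (k * (k - 1))"
    unfolding Iset_def using cB fB by (simp add: card_Plus card_cartesian_product)
  thus ?thesis by (cases k) (auto simp: algebra_simps)
qed

lemma card_complete: "card (complete_edges {..<n}) = n choose 2"
  unfolding complete_edges_def using n_subsets[of "{..<n}" 2] by simp

lemma card_EE: "card (EE k) = 8 * card (Iset k)"
proof -
  have T: "Tri \<subseteq> complete_edges {..<16*k+3}" by (auto simp: Tri_def complete_edges_def)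
  have cT: "card Tri = 3" by (simp add: Tri_def doubleton_eq_iff)
  have "(16*k+3) choose 2 = (16*k+3) * (16*k+2) div 2" by (simp add: choose_two)
  also have "\<dots> = (16*k+3) * (8*k+1)" by (simp add: algebra_simps)
  finally have c2: "(16*k+3) choose 2 = (16*k+3) * (8*k+1)" .
  have "card (EE k) = (16*k+3) * (8*k+1) - 3"
  proof -
    have fin: "finite (complete_edges {..<16*k+3})"
      by (rule finite_subset[of _ "Pow {..<16*k+3}"]) (auto simp: complete_edges_def)
    show ?thesis unfolding EE_def using card_Diff_subset[OF finite_subset[OF T fin] T] cT c2 card_complete
      by simp
  qed
  thus ?thesis by (simp add: card_Iset algebra_simps)
qed


lemma choose_eq: "(16*k+3) choose 2 = 8*(16*k*k+5*k) + 3"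
proof -
  have "(16*k+3) choose 2 = (16*k+3) * (16*k+2) div 2" by (simp add: choose_two)
  also have "\<dots> = (16*k+3) * (8*k+1)" by (simp add: algebra_simps)
  also have "\<dots> = 8*(16*k*k+5*k) + 3" by (simp add: algebra_simps)
  finally show ?thesis .
qed

lemma cyc_in_complete:
  assumes "is_8cycle X C" shows "C \<subseteq> complete_edges X \<and> card C = 8 \<and> finite C"
proof -
  obtain vs where vs: "length vs = 8" "distinct vs" "set vs \<subseteq> X" "C = cycle_edges vs"
    using assms unfolding is_8cycle_def by blast
  have "card C = 8" using card_cycle8[OF vs(1,2)] vs(4) by simp
  moreover have "C \<subseteq> complete_edges X" using edges_in[OF vs(1,2)] vs(3,4) by (auto simp: complete_edges_def)
  ultimately show ?thesis using card_ge_0_finite by force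
qed

lemma max_lb:
  assumes P: "is_8cycle_packing {..<n} Cs L" and m: "(n choose 2) mod 8 = 3"
  shows "3 \<le> card L"
proof -
  let ?K = "complete_edges {..<n}"
  have cyc8: "\<forall>C\<in>Cs. is_8cycle {..<n} C" using P unfolding is_8cycle_packing_def by (rule conjunct1)
  have cyc: "\<And>C. C \<in> Cs \<Longrightarrow> C \<subseteq> ?K \<and> card C = 8 \<and> finite C"
    using cyc8 cyc_in_complete by blast
  have finK: "finite ?K" by (rule finite_subset[of _ "Pow {..<n}"]) (auto simp: complete_edges_def)
  have finCs: "finite Cs" using cyc finK by (intro finite_subset[of Cs "Pow ?K"]) auto
  have U: "\<Union>Cs \<subseteq> ?K" using cyc by blast
  have pw: "pairwise disjnt Cs" using P unfolding is_8cycle_packing_def pairwise_def disjnt_def by blast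
  have "card (\<Union>Cs) = sum card Cs" using card_Union_disjoint[OF pw] cyc by blast
  also have "\<dots> = 8 * card Cs" using cyc by simp
  finally have cU: "card (\<Union>Cs) = 8 * card Cs" .
  have L: "L = ?K - \<Union>Cs" using P unfolding is_8cycle_packing_def by blast
  have cL: "card L = (n choose 2) - 8 * card Cs"
    unfolding L using card_Diff_subset[OF finite_subset[OF U finK] U] cU card_complete by simp
  have le: "8 * card Cs \<le> n choose 2" using card_mono[OF finK U] cU card_complete by simp
  obtain N M where NM: "N = n choose 2" "M = card Cs" by blast
  have "3 \<le> N - 8 * M" using m le unfolding NM[symmetric] by presburger
  thus ?thesis using cL NM by simp
qed

lemma finite_Iset: "finite (Iset k)"
proof -
  have "{(i,j,a,b,t). i<j \<and> j<k \<and> a<(4::nat) \<and> b<(4::nat) \<and> t<(2::nat)} \<subseteq> {..<k} \<times> {..<k} \<times> {..<4} \<times> {..<4} \<times> {..<2}"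
    by auto
  hence "finite {(i,j,a,b,t). i<j \<and> j<k \<and> a<(4::nat) \<and> b<(4::nat) \<and> t<(2::nat)}"
    by (rule finite_subset) auto
  thus ?thesis unfolding Iset_def by auto
qed

lemma pack_s:
  "is_8cycle_packing {..<16*k+3} ((\<lambda>x. cycle_edges (lst s x)) ` Iset k) Tri \<and> inj_on (\<lambda>x. cycle_edges (lst s x)) (Iset k)"
proof -
  let ?c = "\<lambda>x. cycle_edges (lst s x)"
  have fc: "\<And>x. x \<in> Iset k \<Longrightarrow> finite (?c x) \<and> card (?c x) = 8"
  proof -
    fix x assume "x \<in> Iset k"
    note lp = lst_props[OF this, of s]
    have "card (?c x) = 8" using card_cycle8 lp by blast
    thus "finite (?c x) \<and> card (?c x) = 8" using card_ge_0_finite by force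
  qed
  have sub: "\<And>x. x \<in> Iset k \<Longrightarrow> ?c x \<subseteq> EE k" by (rule lst_sub)
  have cov: "EE k \<subseteq> (\<Union>x\<in>Iset k. ?c x)" using lst_cover by blast
  note cd = count_disj[of "Iset k" ?c 8 "EE k", OF finite_Iset fc sub cov card_EE]
  have dj: "\<And>x y. x\<in>Iset k \<Longrightarrow> y\<in>Iset k \<Longrightarrow> x\<noteq>y \<Longrightarrow> ?c x \<inter> ?c y = {}" using cd(2) by blast
  have T: "Tri \<subseteq> complete_edges {..<16*k+3}" by (auto simp: Tri_def complete_edges_def)
  have inj: "inj_on ?c (Iset k)"
  proof (rule inj_onI)
    fix x y assume xy: "x \<in> Iset k" "y \<in> Iset k" "?c x = ?c y"
    show "x = y"
    proof (rule ccontr)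
      assume "x \<noteq> y"
      hence "?c x = {}" using dj[OF xy(1,2)] xy(3) by simp
      thus False using fc[OF xy(1)] by simp
    qed
  qed
  have "is_8cycle_packing {..<16*k+3} (?c ` Iset k) Tri"
    unfolding is_8cycle_packing_def
  proof (intro conjI ballI impI)
    fix C assume "C \<in> ?c ` Iset k"
    then obtain x where x: "x \<in> Iset k" "C = ?c x" by blast
    show "is_8cycle {..<16*k+3} C" unfolding is_8cycle_def using lst_props[OF x(1), of s] x(2) by blast
  next
    fix C1 C2 assume "C1 \<in> ?c ` Iset k" "C2 \<in> ?c ` Iset k" "C1 \<noteq> C2"
    thus "C1 \<inter> C2 = {}" using dj by blast
  next
    show "Tri = complete_edges {..<16*k+3} - \<Union>(?c ` Iset k)"
      using cd(1) T unfolding EE_def by blast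
  qed
  thus ?thesis using inj by blast
qed


theorem lemma3p2:
  fixes n :: nat
  assumes "n mod 16 = 3" and "n \<ge> 19"
  shows "\<exists>Cs L. is_maximum_8cycle_packing {..<n} Cs L \<and> almost_2_perfect {..<n} Cs L"
proof -
  define k where "k = n div 16"
  have nk: "n = 16*k+3" using assms(1) unfolding k_def by (metis mult_div_mod_eq)
  let ?I = "Iset k"
  let ?c = "\<lambda>x. cycle_edges (lst False x)"
  let ?c' = "\<lambda>x. cycle_edges (lst True x)"
  have P0: "is_8cycle_packing {..<n} (?c ` ?I) Tri" and inj0: "inj_on ?c ?I"
    using pack_s[of k False] nk by auto
  have P1: "is_8cycle_packing {..<n} (?c' ` ?I) Tri" and inj1: "inj_on ?c' ?I"
    using pack_s[of k True] nk by auto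
  have cT: "card Tri = 3" by (simp add: Tri_def doubleton_eq_iff)
  have m8: "(8*X + 3) mod 8 = (3::nat)" for X :: nat by simp
  have m: "(n choose 2) mod 8 = 3" unfolding nk choose_eq by (rule m8)
  have maxi: "is_maximum_8cycle_packing {..<n} (?c ` ?I) Tri"
    unfolding is_maximum_8cycle_packing_def using P0 max_lb[OF _ m] cT by auto
  have all8: "\<forall>C\<in>?c' ` ?I. is_8cycle {..<n} C" using P1 unfolding is_8cycle_packing_def by (rule conjunct1)
  define f where "f = (\<lambda>C. ?c' (inv_into ?I ?c C))"
  have fx: "f (?c x) = ?c' x" if "x \<in> ?I" for x
    unfolding f_def using inv_into_f_f[OF inj0 that] by simp
  have "almost_2_perfect {..<n} (?c ` ?I) Tri"
    unfolding almost_2_perfect_def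
  proof (intro exI conjI)
    show "\<forall>C\<in>?c ` ?I. is_inside_8cycle {..<n} C (f C)"
    proof
      fix C assume "C \<in> ?c ` ?I"
      then obtain x where x: "x \<in> ?I" "C = ?c x" by blast
      have c8: "is_8cycle {..<n} (?c' x)" using all8 x(1) by simp
      note ins = lst_inside[OF x(1)]
      have ne: "lst False x \<noteq> []" "lst True x \<noteq> []"
        using lst_props[OF x(1), of False] lst_props[OF x(1), of True] by auto
      show "is_inside_8cycle {..<n} C (f C)"
        unfolding is_inside_8cycle_def cyc_vertices_def x(2) fx[OF x(1)]
        using c8 ins cyc_vert[OF ne(1)] cyc_vert[OF ne(2)] by simp
    qed
    show "inj_on f (?c ` ?I)"
    proof (rule inj_onI)
      fix C D assume "C \<in> ?c ` ?I" "D \<in> ?c ` ?I" "f C = f D"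
      then obtain x y where "x \<in> ?I" "y \<in> ?I" "C = ?c x" "D = ?c y" "?c' x = ?c' y"
        using fx by auto
      thus "C = D" using inj1 by (auto dest: inj_onD)
    qed
    have "f ` (?c ` ?I) = ?c' ` ?I" using fx by (force simp: image_image)
    thus "is_8cycle_packing {..<n} (f ` (?c ` ?I)) Tri" using P1 by simp
  qed
  thus ?thesis using maxi by blast
qed

end
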